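(* Let $D\subset\mathbb R^d$ be an open set, $\alpha\in(0,1)$, $2\alpha<d$, and let $u$ be a nonnegative bounded function on $D$, extended by $0$ to $\mathbb R^d\setminus D$, which is finely continuous with respect to $(\Delta^\alpha)_{|D}$. Then $u(x)=\lim_{r\to0^+}I^{(\alpha)}_ru(x)$ for every $x\in D$.
   Context: $(\Delta^\alpha)_{|D}$ is the Dirichlet fractional Laplacian on $D$, associated with the isotropic $2\alpha$-stable process killed on exiting $D$; its fine topology is the smallest topology making all its excessive functions continuous. $I^{(\alpha)}_ru(x)=\int_{\mathbb R^d\setminus B(x,r)}P_r(x,y)u(y)\,dy$, where $P_r(x,y)=c_{d,\alpha}\Big(\frac{r^2}{|y-x|^2-r^2}\Big)^{\alpha}\frac{1}{|y-x|^d}$, $c_{d,\alpha}=\Gamma(d/2)\pi^{-d/2-1}\sin(\pi\alpha)$, is the Poisson kernel of the ball $B(x,r)$ for the $2\alpha$-stable process, so that $I_r^{(\alpha)}u(x)=E_x u(X_{\tau_{B(x,r)}})$. *)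

theory Defs
  imports "HOL-Analysis.Analysis"
begin

text \<open>The constant c_{d,alpha} and the Poisson kernel P_r(x,y) of the ball B(x,r)
  for the isotropic 2alpha-stable process in the Euclidean space 'a of dimension d = DIM('a).\<close>

definition stable_const :: "real \<Rightarrow> nat \<Rightarrow> real" where
  "stable_const \<alpha> d = Gamma (real d / 2) * pi powr (- real d / 2 - 1) * sin (pi * \<alpha>)"

definition poisson_kernel :: "real \<Rightarrow> real \<Rightarrow> 'a::euclidean_space \<Rightarrow> 'a \<Rightarrow> real" where
  "poisson_kernel \<alpha> r x y =
     stable_const \<alpha> DIM('a) * (r\<^sup>2 / ((norm (y - x))\<^sup>2 - r\<^sup>2)) powr \<alpha> * (1 / norm (y - x) ^ DIM('a))"

text \<open>I_r^{(alpha)} u (x) = integral over R^d minus B(x,r) of P_r(x,y) u(y) dy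
  (as a nonnegative integral; used only for nonnegative u).\<close>

definition I_alpha :: "real \<Rightarrow> real \<Rightarrow> ('a::euclidean_space \<Rightarrow> real) \<Rightarrow> 'a \<Rightarrow> ennreal" where
  "I_alpha \<alpha> r u x =
     (\<integral>\<^sup>+ y. indicator (- ball x r) y * ennreal (poisson_kernel \<alpha> r x y * u y) \<partial>lebesgue)"

definition lsc_on :: "'a::topological_space set \<Rightarrow> ('a \<Rightarrow> real) \<Rightarrow> bool" where
  "lsc_on D u \<longleftrightarrow> (\<forall>x\<in>D. \<forall>c. c < u x \<longrightarrow> eventually (\<lambda>y. c < u y) (at x))"

text \<open>(Finite) excessive functions of the 2alpha-stable process killed on exiting D,
  i.e. of the Dirichlet fractional Laplacian on D: nonnegative alpha-superharmonic
  functions on D, extended by 0 outside D.\<close>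

definition excessive_killed :: "real \<Rightarrow> 'a::euclidean_space set \<Rightarrow> ('a \<Rightarrow> real) \<Rightarrow> bool" where
  "excessive_killed \<alpha> D f \<longleftrightarrow>
     (\<forall>y. 0 \<le> f y) \<and> (\<forall>y. y \<notin> D \<longrightarrow> f y = 0) \<and> lsc_on D f \<and>
     (\<forall>x\<in>D. \<forall>r>0. cball x r \<subseteq> D \<longrightarrow> I_alpha \<alpha> r f x \<le> ennreal (f x))"

definition fine_topology :: "real \<Rightarrow> 'a::euclidean_space set \<Rightarrow> 'a topology" where
  "fine_topology \<alpha> D =
     subtopology (topology_generated_by
        {f -` U | f U. excessive_killed \<alpha> D f \<and> open U}) D"

definition finely_continuous :: "real \<Rightarrow> 'a::euclidean_space set \<Rightarrow> ('a \<Rightarrow> real) \<Rightarrow> bool" where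
  "finely_continuous \<alpha> D u \<longleftrightarrow> continuous_map (fine_topology \<alpha> D) euclideanreal u"

end

theory Submission
  imports Defs
begin


lemma beta_pointwise:
  fixes r s a :: real
  assumes "0 < r" "r < s"
  shows "\<bar>2 * r\<^sup>2 / s ^ 3\<bar> * ((1 - r\<^sup>2 / s\<^sup>2) powr (1 - a - 1) * (1 - (1 - r\<^sup>2 / s\<^sup>2)) powr (a - 1))
         = 2 * ((r\<^sup>2 / (s\<^sup>2 - r\<^sup>2)) powr a / s)"
proof -
  define p where "p = r\<^sup>2 / s\<^sup>2"
  have s0: "s > 0" using assms by linarith
  have p0: "0 < p" using assms unfolding p_def by simp
  have r2: "r\<^sup>2 < s\<^sup>2" using assms by (simp add: power_strict_mono)
  have p1: "p < 1" using r2 s0 unfolding p_def by simp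
  have q: "r\<^sup>2 / (s\<^sup>2 - r\<^sup>2) = p / (1 - p)" unfolding p_def using s0 r2 by (simp add: field_simps)
  have "(1 - p) powr (1 - a - 1) * p powr (a - 1) = (p / (1 - p)) powr a / p"
    using p0 p1 by (simp add: powr_diff powr_minus powr_divide field_simps)
  moreover have "\<bar>2 * r\<^sup>2 / s ^ 3\<bar> = 2 * p / s" unfolding p_def using s0 by (simp add: power3_eq_cube power2_eq_square)
  moreover have "r\<^sup>2 = p * s\<^sup>2" unfolding p_def using s0 by simp
  ultimately show ?thesis using p0 s0 unfolding q
    by (simp add: field_simps power2_eq_square power3_eq_cube)
qed



lemma Beta_refl:
  fixes a :: real assumes "0 < a" "a < 1"
  shows "Beta (1 - a) a = pi / sin (pi * a)"
proof -
  have "Gamma (complex_of_real a) * Gamma (1 - complex_of_real a) = of_real pi / sin (of_real pi * of_real a)"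
    by (rule Gamma_reflection_complex)
  also have "Gamma (complex_of_real a) * Gamma (1 - complex_of_real a) = of_real (Gamma a * Gamma (1 - a))"
    by (simp flip: Gamma_complex_of_real)
  also have "of_real pi / sin (of_real pi * of_real a) = complex_of_real (pi / sin (pi * a))"
    by (simp flip: sin_of_real)
  finally have "Gamma a * Gamma (1 - a) = pi / sin (pi * a)" using of_real_eq_iff by blast
  then show ?thesis unfolding Beta_def by (simp add: mult.commute)
qed

lemma radial_1d:
  fixes a r :: real assumes a: "0 < a" "a < 1" and r: "0 < r"
  shows "((\<lambda>s. (r\<^sup>2 / (s\<^sup>2 - r\<^sup>2)) powr a / s) has_integral (pi / (2 * sin (pi * a)))) {r<..}"
proof -
  define g where "g s = 1 - r\<^sup>2 / s\<^sup>2" for s :: real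
  define g' where "g' s = 2 * r\<^sup>2 / s ^ 3" for s :: real
  define f where "f t = t powr (1 - a - 1) * (1 - t) powr (a - 1)" for t :: real
  have img: "g ` {r<..} = {0<..<1}"
  proof (intro equalityI subsetI)
    fix t assume "t \<in> g ` {r<..}"
    then obtain s where s: "s > r" "t = g s" by auto
    have "r\<^sup>2 < s\<^sup>2" using s r by (simp add: power_strict_mono)
    moreover have "s\<^sup>2 > 0" using s r by simp
    ultimately have "0 < r\<^sup>2 / s\<^sup>2" "r\<^sup>2 / s\<^sup>2 < 1" using r by auto
    then show "t \<in> {0<..<1}" using s unfolding g_def by auto
  next
    fix t :: real assume t: "t \<in> {0<..<1}"
    define s where "s = r / sqrt (1 - t)"
    have st: "sqrt (1 - t) > 0" "sqrt (1 - t) < 1" using t by auto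
    have "r * sqrt (1 - t) < r * 1" using st r by (intro mult_strict_left_mono) auto
    then have "s > r" unfolding s_def using st by (simp add: less_divide_eq)
    moreover have "s\<^sup>2 = r\<^sup>2 / (1 - t)" unfolding s_def using t by (simp add: power_divide)
    then have "r\<^sup>2 / s\<^sup>2 = 1 - t" using t r by simp
    then have "g s = t" unfolding g_def by simp
    ultimately show "t \<in> g ` {r<..}" by force
  qed
  have der: "(g has_field_derivative g' s) (at s within {r<..})" if "s \<in> {r<..}" for s
  proof -
    have s0: "s \<noteq> 0" using that r by auto
    have d1: "((\<lambda>z. r\<^sup>2 / z\<^sup>2) has_real_derivative ((0 * s\<^sup>2 - r\<^sup>2 * (real 2 * s ^ (2 - Suc 0))) / (s\<^sup>2 * s\<^sup>2))) (at s)"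
      by (rule DERIV_divide[OF DERIV_const DERIV_pow]) (use s0 in simp)
    have d2: "((\<lambda>z. 1 - r\<^sup>2 / z\<^sup>2) has_real_derivative (0 - (0 * s\<^sup>2 - r\<^sup>2 * (real 2 * s ^ (2 - Suc 0))) / (s\<^sup>2 * s\<^sup>2))) (at s)"
      by (rule DERIV_diff[OF DERIV_const d1])
    have e: "(0 - (0 * s\<^sup>2 - r\<^sup>2 * (real 2 * s ^ (2 - Suc 0))) / (s\<^sup>2 * s\<^sup>2)) = 2 * r\<^sup>2 / s ^ 3"
      using s0 by (simp add: field_simps power2_eq_square power3_eq_cube)
    show ?thesis unfolding g_def g'_def using d2 e has_field_derivative_at_within by metis
  qed
  have inj: "inj_on g {r<..}"
  proof
    fix x y assume "x \<in> {r<..}" "y \<in> {r<..}" "g x = g y"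
    then have "x\<^sup>2 = y\<^sup>2" "x > 0" "y > 0" using r unfolding g_def by (auto simp: field_simps)
    then show "x = y" by (simp add: power2_eq_iff_nonneg)
  qed
  have B: "(f has_integral Beta (1 - a) a) {0<..<1}"
    using has_integral_Beta_real[of "1 - a" a] a unfolding f_def by (simp add: has_integral_Icc_iff_Ioo)
  have Babs: "f absolutely_integrable_on {0<..<1}"
    by (rule nonnegative_absolutely_integrable_1) (use B in \<open>auto simp: f_def has_integral_integrable\<close>)
  have "(\<lambda>x. \<bar>g' x\<bar> * f (g x)) absolutely_integrable_on {r<..} \<and>
        integral {r<..} (\<lambda>x. \<bar>g' x\<bar> * f (g x)) = Beta (1 - a) a"
    using has_absolute_integral_change_of_variables_1'[of "{r<..}" g g' f "Beta (1 - a) a"] der inj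
      Babs B img by (auto simp: integral_unique)
  then have H: "((\<lambda>x. \<bar>g' x\<bar> * f (g x)) has_integral Beta (1 - a) a) {r<..}"
    using absolutely_integrable_on_def has_integral_integrable_integral by blast
  have eq: "\<bar>g' x\<bar> * f (g x) = 2 * ((r\<^sup>2 / (x\<^sup>2 - r\<^sup>2)) powr a / x)" if "x \<in> {r<..}" for x
    using beta_pointwise[of r x a] that r unfolding g_def g'_def f_def by auto
  have "((\<lambda>x. 2 * ((r\<^sup>2 / (x\<^sup>2 - r\<^sup>2)) powr a / x)) has_integral Beta (1 - a) a) {r<..}"
    using has_integral_spike_finite[OF _ _ H, of "{}"] eq by auto
  from has_integral_mult_right[OF this, of "1/2"]
  show ?thesis using Beta_refl[OF a] by simp
qed



lemma radial_measure:
  fixes a :: real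
  defines "n \<equiv> DIM('a::euclidean_space)"
  shows "distr (lborel::'a measure) borel (\<lambda>z. - norm z) =
    density lborel (\<lambda>s. ennreal (n * unit_ball_vol n * (- s) ^ (n - 1)) * indicator {..<0} s)"
    (is "?N = ?Q")
proof (rule measure_eqI_lessThan)
  show "sets ?N = sets borel" "sets ?Q = sets borel" by auto
  have n1: "n \<ge> 1" unfolding n_def by (simp add: DIM_positive Suc_leI)
  have eN: "emeasure ?N {a<..} = (if a < 0 then ennreal (unit_ball_vol n * (- a) ^ n) else 0)" for a
  proof -
    have "emeasure ?N {a<..} = emeasure lborel ((\<lambda>z::'a. - norm z) -` {a<..})"
      by (subst emeasure_distr) auto
    also have "(\<lambda>z::'a. - norm z) -` {a<..} = ball 0 (- a)" by (auto simp: dist_norm)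
    finally have e: "emeasure ?N {a<..} = emeasure lborel (ball (0::'a) (- a))" .
    show ?thesis
    proof (cases "a < 0")
      case False
      then have b: "ball (0::'a) (- a) = {}" by auto
      show ?thesis using False unfolding e b by simp
    qed (use e emeasure_ball[of "- a" "0::'a"] in \<open>auto simp: n_def\<close>)
  qed
  then show "emeasure ?N {a<..} < \<infinity>" for a by simp
  show "emeasure ?N {a<..} = emeasure ?Q {a<..}" for a
  proof (cases "a < 0")
    case True
    have "emeasure ?Q {a<..} = (\<integral>\<^sup>+ s. ennreal (n * unit_ball_vol n * (- s) ^ (n - 1)) * indicator {..<0} s * indicator {a<..} s \<partial>lborel)"
      by (subst emeasure_density) auto
    also have "\<dots> = (\<integral>\<^sup>+ s. ennreal (n * unit_ball_vol n * (- s) ^ (n - 1)) * indicator {a..0} s \<partial>lborel)"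
    proof (rule nn_integral_cong_AE)
      have "AE s in lborel. s \<noteq> a" by (rule AE_lborel_singleton)
      moreover have "AE s in lborel. s \<noteq> 0" by (rule AE_lborel_singleton)
      ultimately show "AE s in lborel. ennreal (n * unit_ball_vol n * (- s) ^ (n - 1)) * indicator {..<0} s * indicator {a<..} s =
          ennreal (n * unit_ball_vol n * (- s) ^ (n - 1)) * indicator {a..0} s"
        by eventually_elim (auto simp: indicator_def)
    qed
    also have "\<dots> = ennreal ((- unit_ball_vol n * (- 0) ^ n) - (- unit_ball_vol n * (- a) ^ n))"
    proof (rule nn_integral_FTC_Icc)
      show "(\<lambda>s. n * unit_ball_vol n * (- s) ^ (n - 1)) \<in> borel_measurable borel" by measurable
      show "a \<le> 0" using True by simp
      fix s :: real
      have "((\<lambda>s. - unit_ball_vol n * (- s) ^ n) has_real_derivative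
          - unit_ball_vol n * (real n * ((- 1) * (- s) ^ (n - Suc 0)))) (at s)"
        by (intro DERIV_cmult DERIV_power DERIV_minus DERIV_ident)
      then show "((\<lambda>s. - unit_ball_vol n * (- s) ^ n) has_real_derivative
          n * unit_ball_vol n * (- s) ^ (n - 1)) (at s)" by (simp add: mult_ac)
      assume "s \<in> {a..0}"
      then show "0 \<le> n * unit_ball_vol n * (- s) ^ (n - 1)" by simp
    qed
    also have "\<dots> = ennreal (unit_ball_vol n * (- a) ^ n)"
      using n1 True by simp
    finally show ?thesis using eN True by simp
  next
    case False
    have "emeasure ?Q {a<..} = (\<integral>\<^sup>+ s. ennreal (n * unit_ball_vol n * (- s) ^ (n - 1)) * indicator {..<0} s * indicator {a<..} s \<partial>lborel)"
      by (subst emeasure_density) auto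
    also have "\<dots> = (\<integral>\<^sup>+ s. 0 \<partial>(lborel::real measure))"
      by (rule nn_integral_cong) (use False in \<open>auto simp: indicator_def\<close>)
    finally show ?thesis using eN False by simp
  qed
qed

lemma radial:
  fixes h :: "real \<Rightarrow> ennreal"
  assumes [measurable]: "h \<in> borel_measurable borel"
  defines "n \<equiv> DIM('a::euclidean_space)"
  shows "(\<integral>\<^sup>+ z. h (norm z) \<partial>(lborel::'a measure)) =
    (\<integral>\<^sup>+ s. ennreal (n * unit_ball_vol n * s ^ (n - 1)) * indicator {0<..} s * h s \<partial>lborel)"
proof -
  have "(\<integral>\<^sup>+ z. h (norm z) \<partial>(lborel::'a measure)) = (\<integral>\<^sup>+ z. h (- (- norm z)) \<partial>(lborel::'a measure))"
    by simp
  also have "\<dots> = (\<integral>\<^sup>+ s. h (- s) \<partial>distr (lborel::'a measure) borel (\<lambda>z. - norm z))"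
    by (subst nn_integral_distr) auto
  also have "\<dots> = (\<integral>\<^sup>+ s. h (- s) \<partial>density lborel (\<lambda>s. ennreal (n * unit_ball_vol n * (- s) ^ (n - 1)) * indicator {..<0} s))"
    by (simp add: radial_measure n_def)
  also have "\<dots> = (\<integral>\<^sup>+ s. ennreal (n * unit_ball_vol n * (- s) ^ (n - 1)) * indicator {..<0} s * h (- s) \<partial>lborel)"
    by (subst nn_integral_density) auto
  also have "\<dots> = (\<integral>\<^sup>+ s. ennreal (n * unit_ball_vol n * (- s) ^ (n - 1)) * indicator {..<0} s * h (- s) \<partial>distr lborel borel uminus)"
    by (simp add: lborel_distr_uminus)
  also have "\<dots> = (\<integral>\<^sup>+ s. ennreal (n * unit_ball_vol n * (- (- s)) ^ (n - 1)) * indicator {..<0} (- s) * h (- (- s)) \<partial>lborel)"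
    by (subst nn_integral_distr) auto
  also have "\<dots> = (\<integral>\<^sup>+ s. ennreal (n * unit_ball_vol n * s ^ (n - 1)) * indicator {0<..} s * h s \<partial>lborel)"
    by (intro nn_integral_cong) (auto simp: indicator_def)
  finally show ?thesis .
qed



lemma stable_const_pos:
  assumes "0 < a" "a < 1" "n \<ge> 1"
  shows "stable_const a n > 0"
  unfolding stable_const_def using assms by (intro mult_pos_pos Gamma_real_pos sin_gt_zero) auto

lemma poisson_kernel_nonneg:
  assumes "0 < a" "a < 1"
  shows "0 \<le> poisson_kernel a r x (y::'a::euclidean_space)"
  unfolding poisson_kernel_def using stable_const_pos[OF assms, of "DIM('a)"]
  by (intro mult_nonneg_nonneg) (auto simp: DIM_positive Suc_leI)

lemma poisson_kernel_measurable[measurable]: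
  "(\<lambda>y. poisson_kernel a r x y) \<in> borel_measurable (borel :: 'a::euclidean_space measure)"
  unfolding poisson_kernel_def by measurable

lemma const_identity:
  assumes "0 < a" "a < 1" "n \<ge> 1"
  shows "stable_const a n * (real n * unit_ball_vol n) * (pi / (2 * sin (pi * a))) = 1"
proof -
  have s: "sin (pi * a) > 0" using assms by (intro sin_gt_zero) auto
  have nz: "real n / 2 \<notin> \<int>\<^sub>\<le>\<^sub>0" using assms nonpos_Ints_nonpos by fastforce
  have G: "Gamma (real n / 2 + 1) = real n / 2 * Gamma (real n / 2)" by (rule Gamma_plus1[OF nz])
  have Gp: "Gamma (real n / 2) > 0" using assms by auto
  have Gne: "Gamma (real n / 2) \<noteq> 0" using Gp by simp
  have p: "pi powr (- real n / 2 - 1) * pi powr (real n / 2) * pi = 1"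
  proof -
    have "pi powr (- real n / 2 - 1) * pi powr (real n / 2) * pi = pi powr (- real n / 2 - 1) * pi powr (real n / 2) * pi powr 1"
      by simp
    also have "\<dots> = pi powr (- real n / 2 - 1 + real n / 2 + 1)"
      by (simp only: powr_add)
    also have "\<dots> = 1" by simp
    finally show ?thesis .
  qed
  have "stable_const a n * (real n * unit_ball_vol n) * (pi / (2 * sin (pi * a)))
     = (pi powr (- real n / 2 - 1) * pi powr (real n / 2) * pi) * (Gamma (real n / 2) * sin (pi * a) * n) /
        (Gamma (real n / 2 + 1) * 2 * sin (pi * a))"
    unfolding stable_const_def unit_ball_vol_def by (simp add: field_simps)
  also have "\<dots> = 1" unfolding p G using s Gne assms by (simp add: field_simps)
  finally show ?thesis .
qed

definition Pm :: "real \<Rightarrow> real \<Rightarrow> 'a::euclidean_space \<Rightarrow> 'a measure" where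
  "Pm a r x = density lborel (\<lambda>y. indicator (- ball x r) y * ennreal (poisson_kernel a r x y))"

lemma translate_nn:
  fixes x :: "'a::euclidean_space" and G :: "real \<Rightarrow> ennreal"
  assumes [measurable]: "G \<in> borel_measurable borel"
  shows "(\<integral>\<^sup>+ y. G (norm (y - x)) \<partial>lborel) = (\<integral>\<^sup>+ z. G (norm z) \<partial>(lborel::'a measure))"
proof -
  have "(\<integral>\<^sup>+ y. G (norm (y - x)) \<partial>lborel) = (\<integral>\<^sup>+ y. G (norm (y - x)) \<partial>distr lborel borel ((+) x))"
    by (simp add: lborel_distr_plus)
  also have "\<dots> = (\<integral>\<^sup>+ z. G (norm (x + z - x)) \<partial>lborel)"
    by (subst nn_integral_distr) auto
  finally show ?thesis by simp
qed

lemma kernel_radial: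
  fixes x :: "'a::euclidean_space" and G :: "real \<Rightarrow> ennreal"
  assumes [measurable]: "G \<in> borel_measurable borel" and r: "0 < r"
  defines "n \<equiv> DIM('a)"
  shows "(\<integral>\<^sup>+ y. indicator (- ball x r) y * ennreal (poisson_kernel a r x y) * G (norm (y - x)) \<partial>lborel)
    = (\<integral>\<^sup>+ s. ennreal (stable_const a n * (real n * unit_ball_vol n)) *
          (indicator {r<..} s * ennreal ((r\<^sup>2 / (s\<^sup>2 - r\<^sup>2)) powr a / s)) * G s \<partial>lborel)"
proof -
  define H where "H s = indicator {r..} s * ennreal (stable_const a n * (r\<^sup>2 / (s\<^sup>2 - r\<^sup>2)) powr a * (1 / s ^ n)) * G s" for s
  have [measurable]: "H \<in> borel_measurable borel" unfolding H_def by measurable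
  have "(\<integral>\<^sup>+ y. indicator (- ball x r) y * ennreal (poisson_kernel a r x y) * G (norm (y - x)) \<partial>lborel)
      = (\<integral>\<^sup>+ y. H (norm (y - x)) \<partial>lborel)"
    by (intro nn_integral_cong)
       (auto simp: H_def poisson_kernel_def indicator_def dist_norm norm_minus_commute n_def)
  also have "\<dots> = (\<integral>\<^sup>+ z. H (norm z) \<partial>(lborel::'a measure))" by (rule translate_nn) measurable
  also have "\<dots> = (\<integral>\<^sup>+ s. ennreal (real n * unit_ball_vol n * s ^ (n - 1)) * indicator {0<..} s * H s \<partial>lborel)"
    unfolding n_def by (rule radial) measurable
  also have "\<dots> = (\<integral>\<^sup>+ s. ennreal (stable_const a n * (real n * unit_ball_vol n)) *
          (indicator {r<..} s * ennreal ((r\<^sup>2 / (s\<^sup>2 - r\<^sup>2)) powr a / s)) * G s \<partial>lborel)"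
  proof (intro nn_integral_cong)
    fix s :: real
    show "ennreal (real n * unit_ball_vol n * s ^ (n - 1)) * indicator {0<..} s * H s =
      ennreal (stable_const a n * (real n * unit_ball_vol n)) *
          (indicator {r<..} s * ennreal ((r\<^sup>2 / (s\<^sup>2 - r\<^sup>2)) powr a / s)) * G s"
    proof (cases "r < s")
      case True
      then have s0: "s > 0" using r by linarith
      have n1: "n \<ge> 1" unfolding n_def by (simp add: DIM_positive Suc_leI)
      have sn: "s ^ n = s ^ (n - 1) * s" using n1 by (metis Suc_diff_1 less_le_trans zero_less_one power_Suc2 )
      have "ennreal (real n * unit_ball_vol n * s ^ (n - 1)) * ennreal (stable_const a n * (r\<^sup>2 / (s\<^sup>2 - r\<^sup>2)) powr a * (1 / s ^ n))
          = ennreal (real n * unit_ball_vol n * s ^ (n - 1) * (stable_const a n * (r\<^sup>2 / (s\<^sup>2 - r\<^sup>2)) powr a * (1 / s ^ n)))"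
        by (rule ennreal_mult'[symmetric]) (use s0 in simp)
      also have "real n * unit_ball_vol n * s ^ (n - 1) * (stable_const a n * (r\<^sup>2 / (s\<^sup>2 - r\<^sup>2)) powr a * (1 / s ^ n))
          = stable_const a n * (real n * unit_ball_vol n) * ((r\<^sup>2 / (s\<^sup>2 - r\<^sup>2)) powr a / s)"
        unfolding sn using s0 by (simp add: field_simps)
      also have "ennreal \<dots> = ennreal (stable_const a n * (real n * unit_ball_vol n)) * ennreal ((r\<^sup>2 / (s\<^sup>2 - r\<^sup>2)) powr a / s)"
        by (rule ennreal_mult'') (use s0 in simp)
      finally show ?thesis using True s0 unfolding H_def by (simp add: mult_ac)
    next
      case False
      then show ?thesis unfolding H_def by (cases "s = r") (auto simp: indicator_def)
    qed
  qed
  finally show ?thesis .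
qed



lemma space_Pm[simp]: "space (Pm a r x) = UNIV" and sets_Pm[simp]: "sets (Pm a r x) = sets borel"
  unfolding Pm_def by auto

lemma Pm_dens_measurable[measurable]:
  "(\<lambda>y. indicator (- ball x r) y * ennreal (poisson_kernel a r x y)) \<in> borel_measurable (borel::'a::euclidean_space measure)"
  by measurable

lemma Pm_total:
  fixes x :: "'a::euclidean_space"
  assumes a: "0 < a" "a < 1" and r: "0 < r"
  shows "emeasure (Pm a r x) UNIV = 1"
proof -
  define n where "n = DIM('a)"
  have n1: "n \<ge> 1" unfolding n_def by (simp add: DIM_positive Suc_leI)
  have "emeasure (Pm a r x) UNIV = (\<integral>\<^sup>+ y. indicator (- ball x r) y * ennreal (poisson_kernel a r x y) * (\<lambda>_. 1) (norm (y - x)) \<partial>lborel)"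
    unfolding Pm_def by (subst emeasure_density) auto
  also have "\<dots> = (\<integral>\<^sup>+ s. ennreal (stable_const a n * (real n * unit_ball_vol n)) *
          (indicator {r<..} s * ennreal ((r\<^sup>2 / (s\<^sup>2 - r\<^sup>2)) powr a / s)) * (\<lambda>_. 1) s \<partial>lborel)"
    unfolding n_def by (rule kernel_radial[OF _ r]) simp
  also have "\<dots> = ennreal (stable_const a n * (real n * unit_ball_vol n)) *
          (\<integral>\<^sup>+ s. (indicator {r<..} s * ennreal ((r\<^sup>2 / (s\<^sup>2 - r\<^sup>2)) powr a / s)) \<partial>lborel)"
    by (subst nn_integral_cmult[symmetric]) auto
  also have "(\<integral>\<^sup>+ s. (indicator {r<..} s * ennreal ((r\<^sup>2 / (s\<^sup>2 - r\<^sup>2)) powr a / s)) \<partial>lborel) = ennreal (pi / (2 * sin (pi * a)))"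
  proof -
    have "(\<integral>\<^sup>+ s. (indicator {r<..} s * ennreal ((r\<^sup>2 / (s\<^sup>2 - r\<^sup>2)) powr a / s)) \<partial>lborel)
       = (\<integral>\<^sup>+ s. ennreal (indicator {r<..} s * ((r\<^sup>2 / (s\<^sup>2 - r\<^sup>2)) powr a / s)) \<partial>lborel)"
      by (intro nn_integral_cong) (auto simp: indicator_def)
    also have "\<dots> = ennreal (pi / (2 * sin (pi * a)))"
      by (rule nn_integral_has_integral_lebesgue[OF _ radial_1d[OF a r]]) (use r in auto)
    finally show ?thesis .
  qed
  also have "ennreal (stable_const a n * (real n * unit_ball_vol n)) * ennreal (pi / (2 * sin (pi * a))) = 1"
    using const_identity[OF a n1] stable_const_pos[OF a n1] n1
    by (subst ennreal_mult[symmetric]) (auto simp: mult.assoc)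
  finally show ?thesis .
qed

lemma Pm_finite:
  assumes a: "0 < a" "a < 1" and r: "0 < r"
  shows "finite_measure (Pm a r (x::'a::euclidean_space))"
  by (rule finite_measureI) (simp add: Pm_total[OF assms])

lemma Pm_measure_UNIV:
  assumes a: "0 < a" "a < 1" and r: "0 < r"
  shows "measure (Pm a r (x::'a::euclidean_space)) UNIV = 1"
  using Pm_total[OF assms] by (simp add: measure_def)

lemma Pm_compl:
  assumes a: "0 < a" "a < 1" and r: "0 < r" and A: "A \<in> sets borel"
  shows "measure (Pm a r (x::'a::euclidean_space)) (- A) = 1 - measure (Pm a r x) A"
proof -
  interpret finite_measure "Pm a r x" by (rule Pm_finite[OF a r])
  have "measure (Pm a r x) (space (Pm a r x) - A) = measure (Pm a r x) (space (Pm a r x)) - measure (Pm a r x) A"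
    by (rule finite_measure_compl) (use A in simp)
  then show ?thesis using Pm_measure_UNIV[OF a r] by (simp add: Compl_eq_Diff_UNIV)
qed

lemma Pm_tail_bound:
  fixes x :: "'a::euclidean_space"
  assumes a: "0 < a" "a < 1" and r: "0 < r" "2 * r \<le> \<rho>"
  defines "C \<equiv> stable_const a DIM('a) * (real DIM('a) * unit_ball_vol DIM('a))"
  shows "emeasure (Pm a r x) (- ball x \<rho>) \<le> ennreal (C * (2 * r\<^sup>2) powr a * \<rho> powr (- 2 * a) / (2 * a))"
proof -
  define n where "n = DIM('a)"
  have n1: "n \<ge> 1" unfolding n_def by (simp add: DIM_positive Suc_leI)
  have C0: "C > 0" unfolding C_def using stable_const_pos[OF a n1] n1 by (simp add: n_def)
  have rho: "\<rho> > 0" using r by linarith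
  define K where "K = C * (2 * r\<^sup>2) powr a"
  have K0: "K \<ge> 0" unfolding K_def using C0 by simp
  have "emeasure (Pm a r x) (- ball x \<rho>) = (\<integral>\<^sup>+ y. indicator (- ball x r) y * ennreal (poisson_kernel a r x y) * (\<lambda>s. indicator {\<rho>..} s) (norm (y - x)) \<partial>lborel)"
    unfolding Pm_def by (subst emeasure_density) (auto intro!: nn_integral_cong simp: indicator_def dist_norm norm_minus_commute)
  also have "\<dots> = (\<integral>\<^sup>+ s. ennreal C *
          (indicator {r<..} s * ennreal ((r\<^sup>2 / (s\<^sup>2 - r\<^sup>2)) powr a / s)) * (\<lambda>s. indicator {\<rho>..} s) s \<partial>lborel)"
    unfolding C_def by (rule kernel_radial[OF _ r(1)]) simp
  also have "\<dots> \<le> (\<integral>\<^sup>+ s. ennreal (K * s powr (- 2 * a - 1)) * indicator {\<rho>..} s \<partial>lborel)"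
  proof (intro nn_integral_mono)
    fix s :: real
    show "ennreal C * (indicator {r<..} s * ennreal ((r\<^sup>2 / (s\<^sup>2 - r\<^sup>2)) powr a / s)) * indicator {\<rho>..} s
      \<le> ennreal (K * s powr (- 2 * a - 1)) * indicator {\<rho>..} s"
    proof (cases "\<rho> \<le> s")
      case True
      then have s0: "s > 0" using rho by linarith
      have rs: "r < s" using r True by linarith
      have r2: "r\<^sup>2 \<le> s\<^sup>2 / 4"
      proof -
        have "(2 * r)\<^sup>2 \<le> s\<^sup>2" using r True by (intro power_mono) auto
        then show ?thesis by (simp add: power_mult_distrib)
      qed
      have r20: "0 \<le> r\<^sup>2" by simp
      have d1: "s\<^sup>2 / 2 \<le> s\<^sup>2 - r\<^sup>2" "0 < s\<^sup>2 / 2" using r2 r20 s0 by (linarith, simp)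
      have "r\<^sup>2 / (s\<^sup>2 - r\<^sup>2) \<le> r\<^sup>2 / (s\<^sup>2 / 2)"
      proof (rule divide_left_mono)
        have pos: "0 < s\<^sup>2 - r\<^sup>2" using d1 by linarith
        show "0 < (s\<^sup>2 - r\<^sup>2) * (s\<^sup>2 / 2)" by (rule mult_pos_pos[OF pos d1(2)])
      qed (use d1 in auto)
      then have q: "r\<^sup>2 / (s\<^sup>2 - r\<^sup>2) \<le> 2 * r\<^sup>2 / s\<^sup>2" by (simp add: mult.commute)
      have pos2: "0 < s\<^sup>2 - r\<^sup>2" using d1 by linarith
      have q0: "0 \<le> r\<^sup>2 / (s\<^sup>2 - r\<^sup>2)" using pos2 r20 by simp
      have "(r\<^sup>2 / (s\<^sup>2 - r\<^sup>2)) powr a \<le> (2 * r\<^sup>2 / s\<^sup>2) powr a"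
        by (rule powr_mono2) (use a q q0 in auto)
      also have "(2 * r\<^sup>2 / s\<^sup>2) powr a = (2 * r\<^sup>2) powr a * s powr (- 2 * a)"
      proof -
        have e1: "s\<^sup>2 = s powr 2" by (rule powr_numeral[symmetric]) (use s0 in simp)
        have e2: "(s powr 2) powr a = s powr (2 * a)" by (simp add: powr_powr)
        have "(2 * r\<^sup>2 / s\<^sup>2) powr a = (2 * r\<^sup>2) powr a / (s\<^sup>2) powr a"
          by (rule powr_divide)
        also have "\<dots> = (2 * r\<^sup>2) powr a / s powr (2 * a)" unfolding e1 e2 ..
        also have "\<dots> = (2 * r\<^sup>2) powr a * s powr (- 2 * a)"
          by (simp add: powr_minus divide_inverse)
        finally show ?thesis .
      qed
      finally have "(r\<^sup>2 / (s\<^sup>2 - r\<^sup>2)) powr a / s \<le> (2 * r\<^sup>2) powr a * s powr (- 2 * a) / s"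
        using s0 by (simp add: divide_right_mono)
      also have "\<dots> = (2 * r\<^sup>2) powr a * s powr (- 2 * a - 1)"
        using s0 by (simp add: powr_diff)
      finally have le: "(r\<^sup>2 / (s\<^sup>2 - r\<^sup>2)) powr a / s \<le> (2 * r\<^sup>2) powr a * s powr (- 2 * a - 1)" .
      have "ennreal C * ennreal ((r\<^sup>2 / (s\<^sup>2 - r\<^sup>2)) powr a / s) = ennreal (C * ((r\<^sup>2 / (s\<^sup>2 - r\<^sup>2)) powr a / s))"
        by (rule ennreal_mult'[symmetric]) (use C0 in simp)
      also have "\<dots> \<le> ennreal (K * s powr (- 2 * a - 1))"
        unfolding K_def mult.assoc using le C0 by (intro ennreal_leI mult_left_mono) auto
      finally show ?thesis using True rs by (simp add: indicator_def)
    qed (simp add: indicator_def)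
  qed
  also have "\<dots> = ennreal (0 - (- K * \<rho> powr (- 2 * a) / (2 * a)))"
  proof (rule nn_integral_FTC_atLeast)
    show "(\<lambda>s. K * s powr (- 2 * a - 1)) \<in> borel_measurable borel" by measurable
    fix s assume s: "\<rho> \<le> s"
    then have s0: "s > 0" using rho by linarith
    show "0 \<le> K * s powr (- 2 * a - 1)" using K0 by simp
    have "((\<lambda>s. - K * s powr (- 2 * a) / (2 * a)) has_real_derivative
        - K * ((- 2 * a) * s powr (- 2 * a - 1)) / (2 * a)) (at s)"
      by (rule DERIV_cdivide[OF DERIV_cmult[OF has_real_derivative_powr[OF s0]]])
    then show "((\<lambda>s. - K * s powr (- 2 * a) / (2 * a)) has_real_derivative K * s powr (- 2 * a - 1)) (at s)"
      using a by simp
  next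
    have "((\<lambda>s. s powr (- 2 * a)) \<longlongrightarrow> 0) at_top"
      using a by (intro tendsto_neg_powr filterlim_ident) auto
    from tendsto_mult[OF tendsto_const[of "- K / (2 * a)"] this]
    show "((\<lambda>s. - K * s powr (- 2 * a) / (2 * a)) \<longlongrightarrow> 0) at_top" by simp
  qed
  also have "\<dots> = ennreal (C * (2 * r\<^sup>2) powr a * \<rho> powr (- 2 * a) / (2 * a))"
    unfolding K_def by simp
  finally show ?thesis .
qed



lemma Pm_tail_tendsto:
  fixes x :: "'a::euclidean_space"
  assumes a: "0 < a" "a < 1" and rho: "0 < \<rho>"
  shows "((\<lambda>r. measure (Pm a r x) (- ball x \<rho>)) \<longlongrightarrow> 0) (at_right 0)"
proof (rule tendsto_sandwich)
  define C where "C = stable_const a DIM('a) * (real DIM('a) * unit_ball_vol DIM('a))"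
  define B where "B r = C * (2 * r\<^sup>2) powr a * \<rho> powr (- 2 * a) / (2 * a)" for r
  have n1: "DIM('a) \<ge> 1" by (simp add: DIM_positive Suc_leI)
  have C0: "C > 0" unfolding C_def using stable_const_pos[OF a n1] n1 by simp
  show "\<forall>\<^sub>F r in at_right 0. 0 \<le> measure (Pm a r x) (- ball x \<rho>)" by simp
  have "\<forall>\<^sub>F r in at_right 0. r \<in> {0<..<\<rho>/2}" by (rule eventually_at_right_real) (use rho in simp)
  then show "\<forall>\<^sub>F r in at_right 0. measure (Pm a r x) (- ball x \<rho>) \<le> B r"
  proof eventually_elim
    case (elim r)
    then have r: "0 < r" "2 * r \<le> \<rho>" by auto
    show ?case unfolding measure_def B_def
      by (rule enn2real_leI) (use C0 a Pm_tail_bound[OF a r, of x] in \<open>auto simp: C_def\<close>)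
  qed
  have "((\<lambda>r. (2 * r\<^sup>2) powr a) \<longlongrightarrow> 0) (at_right (0::real))"
  proof (rule tendsto_zero_powrI)
    have "((\<lambda>r::real. 2 * r\<^sup>2) \<longlongrightarrow> 2 * 0\<^sup>2) (at_right 0)"
      by (intro tendsto_intros)
    then show "((\<lambda>r::real. 2 * r\<^sup>2) \<longlongrightarrow> 0) (at_right 0)" by simp
  qed (use a in auto)
  from tendsto_mult[OF tendsto_const[of "C"] this]
  have "((\<lambda>r. C * (2 * r\<^sup>2) powr a) \<longlongrightarrow> 0) (at_right (0::real))" by simp
  from tendsto_mult[OF this tendsto_const[of "\<rho> powr (- 2 * a) / (2 * a)"]]
  show "(B \<longlongrightarrow> 0) (at_right 0)" unfolding B_def by (simp add: mult.assoc)
qed simp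

lemma I_mono:
  assumes a: "0 < a" "a < 1" and le: "\<And>y. u y \<le> v y"
  shows "I_alpha a r u x \<le> I_alpha a r v (x::'a::euclidean_space)"
  unfolding I_alpha_def
proof (intro nn_integral_mono)
  fix y
  have k: "0 \<le> poisson_kernel a r x y" by (rule poisson_kernel_nonneg[OF a])
  have "ennreal (poisson_kernel a r x y * u y) \<le> ennreal (poisson_kernel a r x y * v y)"
    by (intro ennreal_leI mult_left_mono le k)
  then show "indicator (- ball x r) y * ennreal (poisson_kernel a r x y * u y)
      \<le> indicator (- ball x r) y * ennreal (poisson_kernel a r x y * v y)"
    by (intro mult_left_mono) auto
qed

lemma I_Pm:
  assumes a: "0 < a" "a < 1" and [measurable]: "g \<in> borel_measurable borel"
  shows "I_alpha a r g x = (\<integral>\<^sup>+ y. ennreal (g y) \<partial>Pm a r (x::'a::euclidean_space))"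
proof -
  have "I_alpha a r g x = (\<integral>\<^sup>+ y. indicator (- ball x r) y * ennreal (poisson_kernel a r x y * g y) \<partial>lborel)"
    unfolding I_alpha_def by (rule nn_integral_completion)
  also have "\<dots> = (\<integral>\<^sup>+ y. indicator (- ball x r) y * ennreal (poisson_kernel a r x y) * ennreal (g y) \<partial>lborel)"
  proof (intro nn_integral_cong)
    fix y
    show "indicator (- ball x r) y * ennreal (poisson_kernel a r x y * g y) =
        indicator (- ball x r) y * ennreal (poisson_kernel a r x y) * ennreal (g y)"
      using poisson_kernel_nonneg[OF a, of r x y] by (simp add: ennreal_mult' mult.assoc)
  qed
  also have "\<dots> = (\<integral>\<^sup>+ y. ennreal (g y) \<partial>Pm a r x)"
    unfolding Pm_def by (subst nn_integral_density) auto
  finally show ?thesis .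
qed

lemma simple_integral2:
  assumes "finite_measure M" "S1 \<in> sets M" "S2 \<in> sets M" "0 \<le> c1" "0 \<le> c2"
  shows "(\<integral>\<^sup>+ y. ennreal (c1 * indicator S1 y + c2 * indicator S2 y) \<partial>M)
    = ennreal (c1 * measure M S1 + c2 * measure M S2)"
proof -
  interpret finite_measure M by fact
  have "(\<integral>\<^sup>+ y. ennreal (c1 * indicator S1 y + c2 * indicator S2 y) \<partial>M)
      = (\<integral>\<^sup>+ y. ennreal c1 * indicator S1 y + ennreal c2 * indicator S2 y \<partial>M)"
    using assms by (intro nn_integral_cong) (auto simp: indicator_def ennreal_plus)
  also have "\<dots> = ennreal c1 * emeasure M S1 + ennreal c2 * emeasure M S2"
    using assms by (subst nn_integral_add) (auto simp: nn_integral_cmult_indicator)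
  also have "\<dots> = ennreal (c1 * measure M S1 + c2 * measure M S2)"
    using assms by (simp add: emeasure_eq_measure ennreal_mult ennreal_plus)
  finally show ?thesis .
qed



lemma Pm_mono:
  assumes a: "0 < a" "a < 1" and r: "0 < r" and B: "B \<in> sets borel" and AB: "A \<subseteq> B"
  shows "measure (Pm a r (x::'a::euclidean_space)) A \<le> measure (Pm a r x) B"
proof -
  interpret finite_measure "Pm a r x" by (rule Pm_finite[OF a r])
  show ?thesis by (rule finite_measure_mono[OF AB]) (use B in simp)
qed

lemma tendsto_0_dominated:
  fixes f g :: "real \<Rightarrow> real"
  assumes "(g \<longlongrightarrow> 0) F" "\<forall>\<^sub>F r in F. 0 \<le> f r \<and> f r \<le> g r"
  shows "(f \<longlongrightarrow> 0) F"
  by (rule tendsto_sandwich[of "\<lambda>_. 0" f F g]) (use assms in \<open>auto elim: eventually_mono\<close>)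

lemma excessive_borel:
  fixes f :: "'a::euclidean_space \<Rightarrow> real"
  assumes D: "open D" and f: "excessive_killed a D f"
  shows "f \<in> borel_measurable borel"
proof (rule borel_measurableI_greater)
  fix t
  have zero: "\<And>y. y \<notin> D \<Longrightarrow> f y = 0" and lsc: "lsc_on D f"
    using f unfolding excessive_killed_def by auto
  have op: "open {y \<in> D. t < f y}"
  proof (subst open_contains_ball, intro ballI)
    fix y assume y: "y \<in> {y \<in> D. t < f y}"
    then have "eventually (\<lambda>z. t < f z) (at y)" using lsc unfolding lsc_on_def by auto
    then obtain d where d: "d > 0" "\<And>z. z \<noteq> y \<Longrightarrow> dist z y < d \<Longrightarrow> t < f z"
      unfolding eventually_at by auto
    obtain e where e: "e > 0" "ball y e \<subseteq> D" using D y open_contains_ball by blast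
    show "\<exists>e>0. ball y e \<subseteq> {y \<in> D. t < f y}"
    proof (intro exI[of _ "min d e"] conjI subsetI)
      fix z assume z: "z \<in> ball y (min d e)"
      show "z \<in> {y \<in> D. t < f y}"
      proof (cases "z = y")
        case False
        then show ?thesis using z e d by (auto simp: dist_commute)
      qed (use y in auto)
    qed (use d e in auto)
  qed
  have nz: "\<not> t < f y" if "\<not> t < 0" "y \<notin> D" for y using zero[OF that(2)] that(1) by simp
  have eq: "{y \<in> space borel. t < f y} = {y \<in> D. t < f y} \<union> (if t < 0 then - D else {})"
  proof (cases "t < 0")
    case True
    then show ?thesis using zero by auto
  next
    case False
    then show ?thesis using nz by auto
  qed
  show "{y \<in> space borel. t < f y} \<in> sets borel"
    unfolding eq using op D by auto
qed

lemma exc_lower_small: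
  fixes f :: "'a::euclidean_space \<Rightarrow> real"
  assumes a: "0 < a" "a < 1" and D: "open D" and f: "excessive_killed a D f" and x: "x \<in> D" and d: "0 < \<delta>"
  shows "((\<lambda>r. measure (Pm a r x) {y. f y \<le> f x - \<delta>}) \<longlongrightarrow> 0) (at_right 0)"
proof -
  have [measurable]: "f \<in> borel_measurable borel" by (rule excessive_borel[OF D f])
  have "eventually (\<lambda>z. f x - \<delta> < f z) (at x)"
    using f x d unfolding excessive_killed_def lsc_on_def by auto
  then obtain \<rho> where rho: "\<rho> > 0" "\<And>z. z \<noteq> x \<Longrightarrow> dist z x < \<rho> \<Longrightarrow> f x - \<delta> < f z"
    unfolding eventually_at by auto
  have sub: "{y. f y \<le> f x - \<delta>} \<subseteq> - ball x \<rho>"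
    using rho d by (force simp: dist_commute)
  show ?thesis
  proof (rule tendsto_0_dominated[OF Pm_tail_tendsto[OF a rho(1)]])
    show "\<forall>\<^sub>F r in at_right 0. 0 \<le> measure (Pm a r x) {y. f y \<le> f x - \<delta>} \<and>
        measure (Pm a r x) {y. f y \<le> f x - \<delta>} \<le> measure (Pm a r x) (- ball x \<rho>)"
      using eventually_at_right_less[of 0]
      by eventually_elim (auto intro!: Pm_mono[OF a] sub)
  qed
qed

lemma exc_upper_small:
  fixes f :: "'a::euclidean_space \<Rightarrow> real"
  assumes a: "0 < a" "a < 1" and D: "open D" and f: "excessive_killed a D f" and x: "x \<in> D" and d: "0 < \<delta>"
  shows "((\<lambda>r. measure (Pm a r x) {y. f x + \<delta> \<le> f y}) \<longlongrightarrow> 0) (at_right 0)"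
proof (rule tendstoI)
  fix e :: real assume e: "e > 0"
  have [measurable]: "f \<in> borel_measurable borel" by (rule excessive_borel[OF D f])
  have f0: "\<And>y. 0 \<le> f y" and exc: "\<And>r. 0 < r \<Longrightarrow> cball x r \<subseteq> D \<Longrightarrow> I_alpha a r f x \<le> ennreal (f x)"
    using f x unfolding excessive_killed_def by auto
  define \<eta> where "\<eta> = e * \<delta> / 2"
  have eta: "\<eta> > 0" unfolding \<eta>_def using e d by simp
  have "eventually (\<lambda>z. f x - \<eta> < f z) (at x)"
    using f x eta unfolding excessive_killed_def lsc_on_def by auto
  then obtain \<rho> where rho: "\<rho> > 0" "\<And>z. z \<noteq> x \<Longrightarrow> dist z x < \<rho> \<Longrightarrow> f x - \<eta> < f z"
    unfolding eventually_at by auto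
  obtain e0 where e0: "e0 > 0" "ball x e0 \<subseteq> D" using D x open_contains_ball by blast
  define A where "A = {y. f x + \<delta> \<le> f y}"
  define B where "B = ball x \<rho>"
  have [measurable]: "A \<in> sets borel" "B \<in> sets borel" unfolding A_def B_def by auto
  define L where "L = f x / \<delta> + 1"
  have "0 \<le> f x / \<delta>" using f0[of x] d by simp
  then have L: "L > 0" unfolding L_def by linarith
  have ev1: "\<forall>\<^sub>F r in at_right 0. measure (Pm a r x) (- B) < e / (2 * L)"
    using Pm_tail_tendsto[OF a rho(1), of x] e L unfolding B_def
    by (auto dest!: order_tendstoD(2)[where a = "e / (2 * L)"])
  have ev2: "\<forall>\<^sub>F r in at_right 0. r \<in> {0<..<e0}"
    by (rule eventually_at_right_real) (use e0 in simp)
  show "\<forall>\<^sub>F r in at_right 0. dist (measure (Pm a r x) {y. f x + \<delta> \<le> f y}) 0 < e"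
    using ev1 ev2
  proof eventually_elim
    case (elim r)
    then have r: "0 < r" "r < e0" and q: "measure (Pm a r x) (- B) < e / (2 * L)" by auto
    interpret finite_measure "Pm a r x" by (rule Pm_finite[OF a r(1)])
    let ?m = "measure (Pm a r x)"
    have cb: "cball x r \<subseteq> D" using r e0 by (auto simp: subset_eq)
    define ap where "ap = max (f x - \<eta>) 0"
    define g where "g y = ap * indicator (B - A) y + (f x + \<delta>) * indicator (A \<inter> B) y" for y
    have g_le: "g y \<le> f y" for y
    proof (cases "y \<in> B")
      case True
      show ?thesis
      proof (cases "y \<in> A")
        case False
        have "ap \<le> f y"
        proof (cases "y = x")
          case False
          then have "f x - \<eta> < f y" using rho True unfolding B_def by (auto simp: dist_commute)
          then show ?thesis unfolding ap_def using f0[of y] by simp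
        qed (use eta f0 in \<open>auto simp: ap_def\<close>)
        then show ?thesis unfolding g_def using True False by simp
      qed (use True in \<open>auto simp: g_def A_def\<close>)
    qed (use f0 in \<open>auto simp: g_def\<close>)
    have eq1: "(\<integral>\<^sup>+ y. ennreal (g y) \<partial>Pm a r x) = ennreal (ap * ?m (B - A) + (f x + \<delta>) * ?m (A \<inter> B))"
      unfolding g_def
      by (rule simple_integral2[OF Pm_finite[OF a r(1)]]) (use f0[of x] d in \<open>auto simp: ap_def\<close>)
    have "(\<integral>\<^sup>+ y. ennreal (g y) \<partial>Pm a r x) \<le> (\<integral>\<^sup>+ y. ennreal (f y) \<partial>Pm a r x)"
      by (intro nn_integral_mono ennreal_leI g_le)
    also have "\<dots> = I_alpha a r f x" by (rule I_Pm[OF a, symmetric]) measurable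
    also have "\<dots> \<le> ennreal (f x)" by (rule exc[OF r(1) cb])
    finally have "ennreal (ap * ?m (B - A) + (f x + \<delta>) * ?m (A \<inter> B)) \<le> ennreal (f x)"
      unfolding eq1 .
    then have main: "ap * ?m (B - A) + (f x + \<delta>) * ?m (A \<inter> B) \<le> f x"
      using f0[of x] by (simp add: ennreal_le_iff)
    have mB: "?m (B - A) + ?m (A \<inter> B) = ?m B"
    proof -
      have "?m ((B - A) \<union> (A \<inter> B)) = ?m (B - A) + ?m (A \<inter> B)"
        by (rule finite_measure_Union) auto
      moreover have "(B - A) \<union> (A \<inter> B) = B" by auto
      ultimately show ?thesis by simp
    qed
    have mB2: "?m B = 1 - ?m (- B)" using Pm_compl[OF a r(1), of B x] by simp
    have mA: "?m A \<le> ?m (A \<inter> B) + ?m (- B)"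
    proof -
      have "?m A \<le> ?m ((A \<inter> B) \<union> - B)" by (rule finite_measure_mono) auto
      also have "\<dots> \<le> ?m (A \<inter> B) + ?m (- B)" by (rule measure_Un_le) auto
      finally show ?thesis .
    qed
    define p where "p = ?m (A \<inter> B)"
    define qq where "qq = ?m (- B)"
    define s where "s = ?m (B - A)"
    have s0: "s \<ge> 0" "p \<ge> 0" "qq \<ge> 0" unfolding s_def p_def qq_def by auto
    have main': "(f x - \<eta>) * s + (f x + \<delta>) * p \<le> f x"
    proof -
      have "(f x - \<eta>) * s \<le> ap * s" unfolding ap_def using s0 by (intro mult_right_mono) auto
      then show ?thesis using main unfolding s_def p_def by linarith
    qed
    have sp: "s + p = 1 - qq" using mB mB2 unfolding s_def p_def qq_def by linarith
    have "(\<delta> + \<eta>) * p \<le> f x * qq + \<eta> * (1 - qq)"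
    proof -
      have "s = 1 - qq - p" using sp by linarith
      then have ms: "(f x - \<eta>) * (1 - qq - p) + (f x + \<delta>) * p \<le> f x" using main' by simp
      have ex: "(f x - \<eta>) * (1 - qq - p) + (f x + \<delta>) * p = f x - f x * qq - \<eta> + \<eta> * qq + (\<delta> + \<eta>) * p"
        by (simp add: algebra_simps)
      show ?thesis using ms unfolding ex by (simp add: algebra_simps)
    qed
    also have "\<dots> \<le> f x * qq + \<eta>" using eta s0 by (simp add: algebra_simps)
    finally have "(\<delta> + \<eta>) * p \<le> f x * qq + \<eta>" .
    moreover have "\<delta> * p \<le> (\<delta> + \<eta>) * p" using eta s0 by (intro mult_right_mono) auto
    ultimately have "\<delta> * p \<le> f x * qq + \<eta>" by linarith
    then have "p \<le> (f x * qq + \<eta>) / \<delta>" using d by (simp add: field_simps)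
    also have "\<dots> = f x / \<delta> * qq + e / 2" unfolding \<eta>_def using d by (simp add: field_simps)
    finally have "?m A \<le> L * qq + e / 2" using mA unfolding L_def p_def qq_def by (simp add: algebra_simps)
    moreover have "L * qq < e / 2" using q L unfolding qq_def by (simp add: field_simps)
    ultimately show ?case unfolding A_def by simp
  qed
qed



lemma good_open:
  fixes x :: "'a::euclidean_space" and al :: real
  assumes al: "0 < al" "al < 1" and D: "open D"
    and G: "generate_topology_on {f -` U | f U. excessive_killed al D f \<and> open U} T"
    and xD: "x \<in> D" and xT: "x \<in> T"
  shows "\<exists>W \<in> sets borel. x \<in> W \<and> W \<subseteq> T \<and> ((\<lambda>r. measure (Pm al r x) (- W)) \<longlongrightarrow> 0) (at_right 0)"
  using G xT
proof (induction rule: generate_topology_on.induct)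
  case Empty
  then show ?case by simp
next
  case (Int S1 S2)
  then obtain W1 W2 where W1: "W1 \<in> sets borel" "x \<in> W1" "W1 \<subseteq> S1" "((\<lambda>r. measure (Pm al r x) (- W1)) \<longlongrightarrow> 0) (at_right 0)"
    and W2: "W2 \<in> sets borel" "x \<in> W2" "W2 \<subseteq> S2" "((\<lambda>r. measure (Pm al r x) (- W2)) \<longlongrightarrow> 0) (at_right 0)"
    by auto
  have lim: "((\<lambda>r. measure (Pm al r x) (- W1) + measure (Pm al r x) (- W2)) \<longlongrightarrow> 0) (at_right 0)"
    using tendsto_add[OF W1(4) W2(4)] by simp
  have "((\<lambda>r. measure (Pm al r x) (- (W1 \<inter> W2))) \<longlongrightarrow> 0) (at_right 0)"
  proof (rule tendsto_0_dominated[OF lim], intro always_eventually allI conjI)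
    fix r
    have "measure (Pm al r x) (- (W1 \<inter> W2)) = measure (Pm al r x) (- W1 \<union> - W2)" by simp
    also have "\<dots> \<le> measure (Pm al r x) (- W1) + measure (Pm al r x) (- W2)"
      by (rule measure_Un_le) (use W1 W2 in auto)
    finally show "measure (Pm al r x) (- (W1 \<inter> W2)) \<le> measure (Pm al r x) (- W1) + measure (Pm al r x) (- W2)" .
  qed simp
  then show ?case using W1 W2 by (intro bexI[of _ "W1 \<inter> W2"]) auto
next
  case (UN K)
  then obtain k where "k \<in> K" "x \<in> k" by auto
  with UN.IH[of k] show ?case by blast
next
  case (Basis s)
  then obtain f U where s: "s = f -` U" and f: "excessive_killed al D f" and U: "open U" by auto
  have [measurable]: "f \<in> borel_measurable borel" by (rule excessive_borel[OF D f])
  have "f x \<in> U" using Basis s by auto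
  then obtain \<delta> where d: "\<delta> > 0" "ball (f x) \<delta> \<subseteq> U" using U open_contains_ball by blast
  define W where "W = {y. f x - \<delta> < f y \<and> f y < f x + \<delta>}"
  have Wb: "W \<in> sets borel" unfolding W_def by measurable
  have Ws: "W \<subseteq> s" unfolding s W_def using d by (auto simp: dist_real_def subset_eq)
  have xW: "x \<in> W" unfolding W_def using d by auto
  have sub: "- W \<subseteq> {y. f y \<le> f x - \<delta>} \<union> {y. f x + \<delta> \<le> f y}" unfolding W_def by auto
  have lim: "((\<lambda>r. measure (Pm al r x) {y. f y \<le> f x - \<delta>} + measure (Pm al r x) {y. f x + \<delta> \<le> f y}) \<longlongrightarrow> 0) (at_right 0)"
    using tendsto_add[OF exc_lower_small[OF al D f xD d(1)] exc_upper_small[OF al D f xD d(1)]] by simp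
  have "((\<lambda>r. measure (Pm al r x) (- W)) \<longlongrightarrow> 0) (at_right 0)"
  proof (rule tendsto_0_dominated[OF lim])
    show "\<forall>\<^sub>F r in at_right 0. 0 \<le> measure (Pm al r x) (- W) \<and>
        measure (Pm al r x) (- W) \<le> measure (Pm al r x) {y. f y \<le> f x - \<delta>} + measure (Pm al r x) {y. f x + \<delta> \<le> f y}"
      using eventually_at_right_less[of 0]
    proof eventually_elim
      case (elim r)
      have "measure (Pm al r x) (- W) \<le> measure (Pm al r x) ({y. f y \<le> f x - \<delta>} \<union> {y. f x + \<delta> \<le> f y})"
        by (rule Pm_mono[OF al elim _ sub]) measurable
      also have "\<dots> \<le> measure (Pm al r x) {y. f y \<le> f x - \<delta>} + measure (Pm al r x) {y. f x + \<delta> \<le> f y}"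
        by (rule measure_Un_le) auto
      finally show ?case by simp
    qed
  qed
  then show ?case using Wb Ws xW by blast
qed



theorem lemma7p9:
  fixes D :: "'a::euclidean_space set" and u :: "'a \<Rightarrow> real" and \<alpha> :: real
  assumes "open D"
    and "0 < \<alpha>" and "\<alpha> < 1" and "2 * \<alpha> < real DIM('a)"
    and "\<forall>y. 0 \<le> u y" and "bounded (range u)"
    and "\<forall>y. y \<notin> D \<longrightarrow> u y = 0"
    and "finely_continuous \<alpha> D u"
  shows "\<forall>x\<in>D. ((\<lambda>r. I_alpha \<alpha> r u x) \<longlongrightarrow> ennreal (u x)) (at_right 0)"
proof
  fix x assume xD: "x \<in> D"
  have D: "open D" and al: "0 < \<alpha>" "\<alpha> < 1" and u0: "\<And>y. 0 \<le> u y" using assms by auto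
  obtain M0 where M0: "\<And>y. norm (u y) \<le> M0" using assms(6) unfolding bounded_iff by auto
  define M where "M = max M0 0"
  have M: "\<And>y. u y \<le> M" "M \<ge> 0"
  proof -
    fix y
    have "u y \<le> M0" using M0[of y] by simp
    then show "u y \<le> M" unfolding M_def by simp
  qed (simp add: M_def)
  define S where "S = {f -` U | f U. excessive_killed \<alpha> D f \<and> open U}"
  have zero_exc: "excessive_killed \<alpha> D (\<lambda>_. 0)"
    unfolding excessive_killed_def lsc_on_def I_alpha_def by auto
  have "UNIV \<in> S" unfolding S_def using zero_exc by (auto intro!: exI[of _ "\<lambda>_. 0"] exI[of _ UNIV])
  then have topTG: "topspace (topology_generated_by S) = UNIV" by auto
  have fine: "fine_topology \<alpha> D = subtopology (topology_generated_by S) D"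
    unfolding fine_topology_def S_def ..
  have cm: "continuous_map (fine_topology \<alpha> D) euclideanreal u"
    using assms(8) unfolding finely_continuous_def .
  define I where "I r = I_alpha \<alpha> r u x" for r
  have Ifin: "I r < top" if r: "r > 0" for r
  proof -
    have "I r \<le> I_alpha \<alpha> r (\<lambda>_. M) x" unfolding I_def by (rule I_mono[OF al M(1)])
    also have "\<dots> = (\<integral>\<^sup>+ y. ennreal M \<partial>Pm \<alpha> r x)" by (rule I_Pm[OF al]) simp
    also have "\<dots> = ennreal M * emeasure (Pm \<alpha> r x) UNIV" by (simp add: nn_integral_const)
    also have "\<dots> = ennreal M" using Pm_total[OF al r, of x] by simp
    finally show ?thesis by (simp add: le_less_trans)
  qed
  have real_lim: "((\<lambda>r. enn2real (I r)) \<longlongrightarrow> u x) (at_right 0)"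
  proof (rule tendstoI)
    fix e :: real assume e: "e > 0"
    define V where "V = {y \<in> topspace (fine_topology \<alpha> D). u y \<in> ball (u x) (e / 2)}"
    have "openin (fine_topology \<alpha> D) V" unfolding V_def
      by (rule openin_continuous_map_preimage[OF cm]) auto
    then obtain T where T: "openin (topology_generated_by S) T" "V = T \<inter> D"
      unfolding fine openin_subtopology by auto
    have xV: "x \<in> V" unfolding V_def fine using xD topTG e by auto
    have G: "generate_topology_on S T" using T(1) by (rule openin_topology_generated_by)
    obtain W where W: "W \<in> sets borel" "x \<in> W" "W \<subseteq> T" "((\<lambda>r. measure (Pm \<alpha> r x) (- W)) \<longlongrightarrow> 0) (at_right 0)"
      using good_open[OF al D G[unfolded S_def] xD] xV T(2) by auto
    obtain e0 where e0: "e0 > 0" "ball x e0 \<subseteq> D" using D xD open_contains_ball by blast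
    define W1 where "W1 = W \<inter> ball x e0"
    have W1b[measurable]: "W1 \<in> sets borel" unfolding W1_def using W(1) by auto
    have W1u: "\<bar>u y - u x\<bar> < e / 2" if "y \<in> W1" for y
    proof -
      have "y \<in> V" using that W(3) e0(2) T(2) unfolding W1_def by auto
      then show ?thesis unfolding V_def by (auto simp: dist_real_def abs_minus_commute)
    qed
    have lim: "((\<lambda>r. measure (Pm \<alpha> r x) (- W) + measure (Pm \<alpha> r x) (- ball x e0)) \<longlongrightarrow> 0) (at_right 0)"
      using tendsto_add[OF W(4) Pm_tail_tendsto[OF al e0(1)]] by simp
    have limW1: "((\<lambda>r. measure (Pm \<alpha> r x) (- W1)) \<longlongrightarrow> 0) (at_right 0)"
    proof (rule tendsto_0_dominated[OF lim], intro always_eventually allI conjI)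
      fix r
      have "measure (Pm \<alpha> r x) (- W1) = measure (Pm \<alpha> r x) (- W \<union> - ball x e0)" unfolding W1_def by simp
      also have "\<dots> \<le> measure (Pm \<alpha> r x) (- W) + measure (Pm \<alpha> r x) (- ball x e0)"
        by (rule measure_Un_le) (use W in auto)
      finally show "measure (Pm \<alpha> r x) (- W1) \<le> measure (Pm \<alpha> r x) (- W) + measure (Pm \<alpha> r x) (- ball x e0)" .
    qed simp
    have ev1: "\<forall>\<^sub>F r in at_right 0. measure (Pm \<alpha> r x) (- W1) < e / (2 * (M + 1))"
      using limW1 e M(2) by (auto dest!: order_tendstoD(2)[where a = "e / (2 * (M + 1))"])
    show "\<forall>\<^sub>F r in at_right 0. dist (enn2real (I r)) (u x) < e"
      using ev1 eventually_at_right_less[of 0]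
    proof eventually_elim
      case (elim r)
      then have r: "r > 0" and q: "measure (Pm \<alpha> r x) (- W1) < e / (2 * (M + 1))" by auto
      let ?m = "measure (Pm \<alpha> r x)"
      define q where "q = ?m (- W1)"
      have q0: "q \<ge> 0" unfolding q_def by simp
      have mW1: "?m W1 = 1 - q" unfolding q_def using Pm_compl[OF al r W1b, of x] by simp
      have Mq: "M * q < e / 2"
      proof -
        have "M * q \<le> M * (e / (2 * (M + 1)))" using q M(2) unfolding q_def by (intro mult_left_mono) auto
        also have "\<dots> < e / 2" using M(2) e by (simp add: field_simps)
        finally show ?thesis .
      qed
      have uxM: "u x \<le> M" by (rule M(1))
      define gu where "gu y = (u x + e / 2) * indicator W1 y + M * indicator (- W1) y" for y
      have gu_ge: "u y \<le> gu y" for y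
      proof (cases "y \<in> W1")
        case True
        have "u y \<le> u x + e / 2" using abs_less_iff[THEN iffD1, OF W1u[OF True]] by linarith
        then show ?thesis using True unfolding gu_def by simp
      qed (use M in \<open>auto simp: gu_def\<close>)
      have "I r \<le> I_alpha \<alpha> r gu x" unfolding I_def by (rule I_mono[OF al gu_ge])
      also have "\<dots> = (\<integral>\<^sup>+ y. ennreal (gu y) \<partial>Pm \<alpha> r x)" by (rule I_Pm[OF al]) (unfold gu_def, measurable)
      also have "\<dots> = ennreal ((u x + e / 2) * ?m W1 + M * ?m (- W1))" unfolding gu_def
        by (rule simple_integral2[OF Pm_finite[OF al r]]) (use u0[of x] e M in auto)
      finally have up: "enn2real (I r) \<le> (u x + e / 2) * ?m W1 + M * ?m (- W1)"
        by (intro enn2real_leI) (use u0[of x] e M in auto)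
      have "(u x + e / 2) * ?m W1 \<le> u x + e / 2"
        unfolding mW1 using u0[of x] e q0 by (simp add: algebra_simps)
      then have upper: "enn2real (I r) < u x + e" using up Mq unfolding q_def by linarith
      define c where "c = max (u x - e / 2) 0"
      define gl where "gl y = c * indicator W1 y + 0 * indicator W1 y" for y
      have gl_le: "gl y \<le> u y" for y
      proof (cases "y \<in> W1")
        case True
        have "u x - e / 2 \<le> u y" using abs_less_iff[THEN iffD1, OF W1u[OF True]] by linarith
        then show ?thesis using True u0[of y] unfolding gl_def c_def by simp
      qed (use u0 in \<open>auto simp: gl_def\<close>)
      have "ennreal (c * ?m W1 + 0 * ?m W1) = (\<integral>\<^sup>+ y. ennreal (gl y) \<partial>Pm \<alpha> r x)" unfolding gl_def
        by (rule simple_integral2[OF Pm_finite[OF al r], symmetric]) (auto simp: c_def)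
      also have "\<dots> = I_alpha \<alpha> r gl x" by (rule I_Pm[OF al, symmetric]) (unfold gl_def, measurable)
      also have "\<dots> \<le> I r" unfolding I_def by (rule I_mono[OF al gl_le])
      finally have "enn2real (ennreal (c * ?m W1)) \<le> enn2real (I r)"
        by (intro enn2real_mono Ifin[OF r]) simp
      then have lo: "c * ?m W1 \<le> enn2real (I r)" by (simp add: c_def)
      have "c * ?m W1 = c - c * q" unfolding mW1 by (simp add: algebra_simps)
      moreover have "c * q \<le> M * q" using q0 uxM M(2) e unfolding c_def by (intro mult_right_mono) auto
      moreover have "u x - e / 2 \<le> c" unfolding c_def by simp
      ultimately have lower: "u x - e < enn2real (I r)" using lo Mq by linarith
      show ?case using upper lower by (simp add: dist_real_def abs_less_iff)
    qed
  qed
  have "((\<lambda>r. ennreal (enn2real (I r))) \<longlongrightarrow> ennreal (u x)) (at_right 0)"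
    by (rule tendsto_ennrealI[OF real_lim])
  moreover have "\<forall>\<^sub>F r in at_right 0. ennreal (enn2real (I r)) = I r"
    using eventually_at_right_less[of 0] by eventually_elim (use Ifin in \<open>auto simp: less_top\<close>)
  ultimately show "((\<lambda>r. I_alpha \<alpha> r u x) \<longlongrightarrow> ennreal (u x)) (at_right 0)"
    unfolding I_def by (simp add: tendsto_cong)
qed


end
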